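(* Let $X, Y \subseteq \omega$. There exists a non-order-reversing embedding $f : \mathcal{G}^X \to \mathcal{G}^Y$ if and only if $X \le_e Y$.
   Context: A pca is a set with a partial binary application operation containing distinct $\mathrm{s},\mathrm{k}$ with $\mathrm{k}ab\downarrow=a$, $\mathrm{s}ab\downarrow$, $\mathrm{s}abc\simeq(ac)(bc)$. An embedding of pcas is an injective map $f$ with: if $ab$ is defined then $f(a)f(b)$ is defined and equals $f(ab)$. Scott's graph model: on $\mathcal{P}(\omega)$, $A\cdot B=\{n:\exists u\,(\langle n,u\rangle\in A\wedge D_u\subseteq B)\}$, with $\langle\cdot,\cdot\rangle$ a bijective computable pairing, $\langle 0,0\rangle=0$, and $D_u$ the finite set with canonical code $u$. $\mathcal{G}^Z$ is the least class containing $Z$ and all c.e. sets and closed under this application (equivalently, all sets $\le_e Z$), a pca. $A\le_e Z$ means there is a c.e. relation $R$ with $x\in A\iff\exists u\,(R(x,u)\wedge D_u\subseteq Z)$. An embedding $f:\mathcal{G}^X\to\mathcal{G}^Y$ is order-reversing if for all $A,B\in\mathcal{G}^X$ with $A\subseteq B$ we have $f(B)\subseteq f(A)$. *)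

theory Defs
  imports Main "HOL-Library.Nat_Bijection"
begin

definition proj :: "nat \<Rightarrow> nat list \<Rightarrow> nat" where
  "proj i xs = (if i < length xs then xs ! i else 0)"

definition prec :: "(nat list \<Rightarrow> nat) \<Rightarrow> (nat list \<Rightarrow> nat) \<Rightarrow> nat list \<Rightarrow> nat" where
  "prec g h xs = (case xs of [] \<Rightarrow> g []
      | n # ys \<Rightarrow> rec_nat (g ys) (\<lambda>m r. h (r # m # ys)) n)"

inductive primrec_fn :: "(nat list \<Rightarrow> nat) \<Rightarrow> bool" where
  pr_zero: "primrec_fn (\<lambda>xs. 0)"
| pr_succ: "primrec_fn (\<lambda>xs. Suc (proj 0 xs))"
| pr_proj: "primrec_fn (proj i)"
| pr_comp: "primrec_fn f \<Longrightarrow> (\<forall>g\<in>set gs. primrec_fn g) \<Longrightarrow>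
            primrec_fn (\<lambda>xs. f (map (\<lambda>g. g xs) gs))"
| pr_rec: "primrec_fn g \<Longrightarrow> primrec_fn h \<Longrightarrow> primrec_fn (prec g h)"

text \<open>A set of naturals is c.e. iff it is the projection of a primitive recursive relation
  (Kleene normal form); likewise for binary relations.\<close>
definition ce_set :: "nat set \<Rightarrow> bool" where
  "ce_set S \<longleftrightarrow> (\<exists>p. primrec_fn p \<and> S = {x. \<exists>y. p [x, y] = 0})"

definition ce_rel :: "(nat \<Rightarrow> nat \<Rightarrow> bool) \<Rightarrow> bool" where
  "ce_rel R \<longleftrightarrow> (\<exists>p. primrec_fn p \<and> (\<forall>x u. R x u \<longleftrightarrow> (\<exists>y. p [x, u, y] = 0)))"

text \<open>D u: the finite set with canonical code u (u = sum of 2^i over i in D u).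
  Pairing: Cantor pairing prod_encode, a computable bijection with prod_encode (0,0) = 0.\<close>
abbreviation D :: "nat \<Rightarrow> nat set" where "D u \<equiv> set_decode u"

definition pair :: "nat \<Rightarrow> nat \<Rightarrow> nat" where "pair n u = prod_encode (n, u)"

definition e_reducible :: "nat set \<Rightarrow> nat set \<Rightarrow> bool" (infix "\<le>\<^sub>e" 50) where
  "A \<le>\<^sub>e Z \<longleftrightarrow> (\<exists>R. ce_rel R \<and> (\<forall>x. x \<in> A \<longleftrightarrow> (\<exists>u. R x u \<and> D u \<subseteq> Z)))"

definition gapp :: "nat set \<Rightarrow> nat set \<Rightarrow> nat set" where
  "gapp A B = {n. \<exists>u. pair n u \<in> A \<and> D u \<subseteq> B}"

inductive_set G :: "nat set \<Rightarrow> nat set set" for Z :: "nat set" where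
  G_base: "Z \<in> G Z"
| G_ce: "ce_set S \<Longrightarrow> S \<in> G Z"
| G_app: "A \<in> G Z \<Longrightarrow> B \<in> G Z \<Longrightarrow> gapp A B \<in> G Z"

text \<open>Embedding of pcas G^X \<rightarrow> G^Y (application in G is total).\<close>
definition pca_embedding :: "nat set \<Rightarrow> nat set \<Rightarrow> (nat set \<Rightarrow> nat set) \<Rightarrow> bool" where
  "pca_embedding X Y f \<longleftrightarrow>
     (\<forall>A\<in>G X. f A \<in> G Y) \<and> inj_on f (G X) \<and>
     (\<forall>A\<in>G X. \<forall>B\<in>G X. f (gapp A B) = gapp (f A) (f B))"

definition order_reversing :: "nat set \<Rightarrow> (nat set \<Rightarrow> nat set) \<Rightarrow> bool" where
  "order_reversing X f \<longleftrightarrow> (\<forall>A\<in>G X. \<forall>B\<in>G X. A \<subseteq> B \<longrightarrow> f B \<subseteq> f A)"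

end

theory Submission
  imports Defs
begin


lemma proj_Cons0[simp]: "proj 0 (a # l) = a" by (simp add: proj_def)
lemma proj_ConsS[simp]: "proj (Suc i) (a # l) = proj i l" by (simp add: proj_def)
lemma proj_Nil[simp]: "proj i [] = 0" by (simp add: proj_def)
lemma proj_tl[simp]: "proj i (tl l) = proj (Suc i) l"
  by (cases l) (auto simp: proj_def)

definition norm :: "nat \<Rightarrow> nat list \<Rightarrow> nat list" where
  "norm N xs = map (\<lambda>i. proj i xs) [0..<N]"

lemma proj_norm: "proj i (norm N xs) = (if i < N then proj i xs else 0)"
  by (simp add: norm_def proj_def)

lemma norm_norm: "N \<le> M \<Longrightarrow> norm N (norm M xs) = norm N xs"
  unfolding norm_def[of N] by (auto simp: proj_norm)

lemma norm_Cons: "norm (Suc M) (n # ys) = n # norm M ys"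
  by (simp add: norm_def upt_conv_Cons map_Suc_upt[symmetric] del: upt_Suc)

lemma norm_Nil: "norm M [] = replicate M 0"
  by (simp add: norm_def map_replicate_const)

definition dep :: "nat \<Rightarrow> (nat list \<Rightarrow> nat) \<Rightarrow> bool" where
  "dep N F \<longleftrightarrow> (\<forall>xs. F xs = F (norm N xs))"

lemma dep_mono: "dep N F \<Longrightarrow> N \<le> M \<Longrightarrow> dep M F"
  unfolding dep_def by (metis norm_norm)

lemma dep_list: "\<forall>g\<in>set gs. \<exists>N. dep N g \<Longrightarrow> \<exists>N. \<forall>g\<in>set gs. dep N g"
proof (induction gs)
  case Nil then show ?case by simp
next
  case (Cons g gs)
  then obtain N M where "\<forall>g\<in>set gs. dep N g" "dep M g" by auto
  then show ?case by (intro exI[of _ "max N M"]) (auto intro: dep_mono)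
qed

lemma primrec_dep: "primrec_fn F \<Longrightarrow> \<exists>N. dep N F"
proof (induction rule: primrec_fn.induct)
  case pr_zero then show ?case by (auto simp: dep_def)
next
  case pr_succ then show ?case by (intro exI[of _ 1]) (auto simp: dep_def proj_norm)
next
  case (pr_proj i) then show ?case by (intro exI[of _ "Suc i"]) (auto simp: dep_def proj_norm)
next
  case (pr_comp f gs)
  then obtain N where "\<forall>g\<in>set gs. dep N g" using dep_list by blast
  then show ?case by (intro exI[of _ N]) (auto simp: dep_def intro!: arg_cong[where f=f])
next
  case (pr_rec g h)
  then obtain N1 N2 where "dep N1 g" "dep N2 h" by auto
  define M where "M = max N1 N2"
  have g: "dep M g" and h: "dep (Suc (Suc M)) h"
    using \<open>dep N1 g\<close> \<open>dep N2 h\<close> by (auto simp: M_def intro: dep_mono)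
  have "dep (Suc M) (prec g h)"
    unfolding dep_def
  proof
    fix xs show "prec g h xs = prec g h (norm (Suc M) xs)"
    proof (cases xs)
      case Nil
      have "g [] = g (replicate M 0)" using g by (simp add: dep_def norm_Nil[symmetric])
      then show ?thesis using Nil by (simp add: prec_def norm_Nil)
    next
      case (Cons n ys)
      have "rec_nat (g ys) (\<lambda>m r. h (r # m # ys)) n =
            rec_nat (g (norm M ys)) (\<lambda>m r. h (r # m # norm M ys)) n"
      proof -
        have "g ys = g (norm M ys)" using g by (simp add: dep_def)
        moreover have "\<And>r m. h (r # m # ys) = h (r # m # norm M ys)"
          using h unfolding dep_def by (metis norm_Cons)
        ultimately show ?thesis by simp
      qed
      then show ?thesis using Cons by (simp add: prec_def norm_Cons)
    qed
  qed
  then show ?case by blast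
qed

definition listfn :: "(nat list \<Rightarrow> nat list) \<Rightarrow> bool" where
  "listfn L \<longleftrightarrow> (\<forall>i. primrec_fn (\<lambda>xs. proj i (L xs)))"

lemma pr_subst: "primrec_fn F \<Longrightarrow> listfn L \<Longrightarrow> primrec_fn (\<lambda>xs. F (L xs))"
proof -
  assume F: "primrec_fn F" and L: "listfn L"
  obtain N where N: "dep N F" using primrec_dep[OF F] by blast
  have "primrec_fn (\<lambda>xs. F (map (\<lambda>g. g xs) (map (\<lambda>i xs. proj i (L xs)) [0..<N])))"
    using L F by (intro pr_comp) (auto simp: listfn_def)
  moreover have "(\<lambda>xs. F (map (\<lambda>g. g xs) (map (\<lambda>i xs. proj i (L xs)) [0..<N]))) = (\<lambda>xs. F (L xs))"
    using N by (auto simp: dep_def norm_def comp_def)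
  ultimately show ?thesis by simp
qed

lemma listfn_id[intro]: "listfn (\<lambda>xs. xs)"
  by (auto simp: listfn_def intro: pr_proj[unfolded fun_eq_iff])

lemma pr_const[intro]: "primrec_fn (\<lambda>xs. c)"
proof (induction c)
  case 0 then show ?case by (rule pr_zero)
next
  case (Suc c)
  have "primrec_fn (\<lambda>xs. (\<lambda>ys. Suc (proj 0 ys)) (map (\<lambda>g. g xs) [\<lambda>xs. c]))"
    by (rule pr_comp[OF pr_succ]) (use Suc in auto)
  then show ?case by simp
qed

lemma listfn_Nil[intro]: "listfn (\<lambda>xs. [])"
  by (auto simp: listfn_def)

lemma listfn_tl[intro]: "listfn L \<Longrightarrow> listfn (\<lambda>xs. tl (L xs))"
  by (auto simp: listfn_def)

lemma listfn_Cons[intro]: "primrec_fn a \<Longrightarrow> listfn L \<Longrightarrow> listfn (\<lambda>xs. a xs # L xs)"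
  unfolding listfn_def
proof
  fix i assume "primrec_fn a" "\<forall>i. primrec_fn (\<lambda>xs. proj i (L xs))"
  then show "primrec_fn (\<lambda>xs. proj i (a xs # L xs))"
    by (cases i) auto
qed

lemma pr_projL[intro]: "listfn L \<Longrightarrow> primrec_fn (\<lambda>xs. proj i (L xs))"
  by (simp add: listfn_def)

lemma pr_proj'[intro]: "primrec_fn (\<lambda>xs. proj i xs)"
  using pr_proj[of i] by (simp add: eta_contract_eq)

lemma pr_rec': 
  assumes "primrec_fn b" "primrec_fn n" "primrec_fn (\<lambda>ys. s (proj 0 ys) (proj 1 ys) (tl (tl ys)))"
  shows "primrec_fn (\<lambda>xs. rec_nat (b xs) (\<lambda>m r. s r m xs) (n xs))"
proof -
  let ?H = "\<lambda>ys. s (proj 0 ys) (proj 1 ys) (tl (tl ys))"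
  have "primrec_fn (\<lambda>xs. prec b ?H (n xs # xs))"
    by (rule pr_subst[OF pr_rec[OF assms(1,3)]]) (use assms(2) in auto)
  then show ?thesis by (simp add: prec_def)
qed

definition pr1 :: "(nat \<Rightarrow> nat) \<Rightarrow> bool" where "pr1 F \<longleftrightarrow> primrec_fn (\<lambda>xs. F (proj 0 xs))"
definition pr2 :: "(nat \<Rightarrow> nat \<Rightarrow> nat) \<Rightarrow> bool" where
  "pr2 F \<longleftrightarrow> primrec_fn (\<lambda>xs. F (proj 0 xs) (proj 1 xs))"

lemma listfn_tltl[intro]: "listfn (\<lambda>ys. tl (tl ys))"
  by (auto simp: listfn_def)

lemma listfn_tl1[intro]: "listfn (\<lambda>ys. tl ys)"
  by (auto simp: listfn_def)

named_theorems prI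
declare pr_const[prI] pr_proj'[prI] listfn_id[prI] listfn_Nil[prI] listfn_Cons[prI]

lemma pr_substL: "primrec_fn F \<Longrightarrow> listfn L \<Longrightarrow> H = (\<lambda>xs. F (L xs)) \<Longrightarrow> primrec_fn H"
  using pr_subst by blast

lemma pr1_comp: "pr1 F \<Longrightarrow> primrec_fn a \<Longrightarrow> primrec_fn (\<lambda>xs. F (a xs))"
  unfolding pr1_def by (erule pr_substL[where L="\<lambda>xs. [a xs]"]) auto

lemma pr2_comp: "pr2 F \<Longrightarrow> primrec_fn a \<Longrightarrow> primrec_fn b \<Longrightarrow> primrec_fn (\<lambda>xs. F (a xs) (b xs))"
  unfolding pr2_def by (erule pr_substL[where L="\<lambda>xs. [a xs, b xs]"]) (auto intro!: listfn_Cons)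

lemma pr1_Suc: "pr1 Suc" unfolding pr1_def by (rule pr_succ)

lemma pr_Suc[intro,prI]: "primrec_fn a \<Longrightarrow> primrec_fn (\<lambda>xs. Suc (a xs))"
  by (rule pr1_comp[OF pr1_Suc])

lemma pr_recI:
  assumes "primrec_fn b" "primrec_fn n" "primrec_fn (\<lambda>ys. s (proj 0 ys) (proj 1 ys) (tl (tl ys)))"
    "\<And>xs. F xs = rec_nat (b xs) (\<lambda>m r. s r m xs) (n xs)"
  shows "primrec_fn F"
proof -
  have "F = (\<lambda>xs. rec_nat (b xs) (\<lambda>m r. s r m xs) (n xs))" by (rule ext) (rule assms(4))
  then show ?thesis using pr_rec'[OF assms(1-3)] by simp
qed

lemma rec_add: "rec_nat a (\<lambda>m r. Suc r) n = a + n" by (induction n) auto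
lemma pr_add[intro,prI]: "primrec_fn a \<Longrightarrow> primrec_fn b \<Longrightarrow> primrec_fn (\<lambda>xs. a xs + b xs)"
  by (rule pr_recI[where b=a and n=b and s="\<lambda>r m xs. Suc r"]) (simp_all add: rec_add prI)

lemma rec_pred: "rec_nat 0 (\<lambda>m r. m) n = n - 1" by (induction n) auto
lemma pr_pred: "primrec_fn a \<Longrightarrow> primrec_fn (\<lambda>xs. a xs - 1)"
  by (rule pr_recI[where b="\<lambda>xs. 0" and n=a and s="\<lambda>r m xs. m"]) (simp_all add: rec_pred prI)

lemma rec_sub: "rec_nat a (\<lambda>m r. r - 1) n = a - n" by (induction n) auto
lemma pr_sub[intro,prI]: "primrec_fn a \<Longrightarrow> primrec_fn b \<Longrightarrow> primrec_fn (\<lambda>xs. a xs - b xs)"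
  by (rule pr_recI[where b=a and n=b and s="\<lambda>r m xs. r - 1"])
     (simp_all add: rec_sub[simplified] pr_pred[where a="\<lambda>ys. proj 0 ys", simplified] prI)

lemma rec_mult: "rec_nat 0 (\<lambda>m r. r + a) n = a * n" by (induction n) auto
lemma pr_mult[intro,prI]: "primrec_fn a \<Longrightarrow> primrec_fn b \<Longrightarrow> primrec_fn (\<lambda>xs. a xs * b xs)"
proof -
  assume a: "primrec_fn a" and b: "primrec_fn b"
  have h: "primrec_fn (\<lambda>ys. a (tl (tl ys)))" by (rule pr_substL[OF a, where L="\<lambda>ys. tl (tl ys)"]) auto
  show ?thesis
    by (rule pr_recI[where b="\<lambda>xs. 0" and n=b and s="\<lambda>r m xs. r + a xs"]) (simp_all add: rec_mult b h prI)
qed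

lemma rec_if: "rec_nat a (\<lambda>m r. b) n = (if n = 0 then a else b)" by (cases n) auto
lemma pr_if0: "primrec_fn q \<Longrightarrow> primrec_fn a \<Longrightarrow> primrec_fn b \<Longrightarrow>
  primrec_fn (\<lambda>xs. if q xs = 0 then a xs else b xs)"
proof -
  assume q: "primrec_fn q" and a: "primrec_fn a" and b: "primrec_fn b"
  have h: "primrec_fn (\<lambda>ys. b (tl (tl ys)))" by (rule pr_substL[OF b, where L="\<lambda>ys. tl (tl ys)"]) auto
  show ?thesis
    by (rule pr_recI[where b=a and n=q and s="\<lambda>r m xs. b xs"]) (simp_all add: rec_if a q h)
qed

lemma rec_pow: "rec_nat 1 (\<lambda>m r. r + r) n = (2::nat) ^ n" by (induction n) auto
lemma pr_pow2[intro,prI]: "primrec_fn a \<Longrightarrow> primrec_fn (\<lambda>xs. 2 ^ a xs)"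
  by (rule pr_recI[where b="\<lambda>xs. 1" and n=a and s="\<lambda>r m xs. r + r"]) (simp_all add: rec_pow[simplified] prI)

lemma rec_mod2: "rec_nat 0 (\<lambda>m r. 1 - r) n = n mod 2" by (induction n) (auto simp: mod_Suc)
lemma pr_mod2[intro,prI]: "primrec_fn a \<Longrightarrow> primrec_fn (\<lambda>xs. a xs mod 2)"
  by (rule pr_recI[where b="\<lambda>xs. 0" and n=a and s="\<lambda>r m xs. 1 - r"]) (simp_all add: rec_mod2[simplified] prI)

lemma rec_div2: "rec_nat 0 (\<lambda>m r. r + m mod 2) n = n div 2"
  by (induction n) (simp_all, presburger)
lemma pr_div2: "primrec_fn a \<Longrightarrow> primrec_fn (\<lambda>xs. a xs div 2)"
  by (rule pr_recI[where b="\<lambda>xs. 0" and n=a and s="\<lambda>r m xs. r + m mod 2"]) (simp_all add: rec_div2 prI)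

lemma rec_divpow: "rec_nat u (\<lambda>m r. r div 2) n = u div (2::nat) ^ n"
  by (induction n) (simp_all, metis div_mult2_eq mult.commute)
lemma pr_div2p: "primrec_fn (\<lambda>ys. proj 0 ys div 2)" by (rule pr_div2) (rule pr_proj')
lemma pr_divpow[intro,prI]: "primrec_fn a \<Longrightarrow> primrec_fn b \<Longrightarrow> primrec_fn (\<lambda>xs. a xs div 2 ^ b xs)"
  by (rule pr_recI[where b=a and n=b and s="\<lambda>r m xs. r div 2"])
     (simp_all add: rec_divpow pr_div2p)

lemma rec_tri: "rec_nat 0 (\<lambda>m r. r + Suc m) n = triangle n" by (induction n) auto
lemma pr_tri: "primrec_fn a \<Longrightarrow> primrec_fn (\<lambda>xs. triangle (a xs))"
  by (rule pr_recI[where b="\<lambda>xs. 0" and n=a and s="\<lambda>r m xs. r + Suc m"]) (simp_all add: rec_tri[simplified] prI)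

lemma pr_pair[intro,prI]: "primrec_fn a \<Longrightarrow> primrec_fn b \<Longrightarrow> primrec_fn (\<lambda>xs. pair (a xs) (b xs))"
  unfolding pair_def prod_encode_def by (simp add: pr_tri prI)

lemma rec_sum: "rec_nat 0 (\<lambda>m r. r + g m) n = (\<Sum>i<n. g i)" by (induction n) auto
lemma pr_sum[intro,prI]: "primrec_fn (\<lambda>ys. g (proj 0 ys) (tl ys)) \<Longrightarrow> primrec_fn b \<Longrightarrow>
   primrec_fn (\<lambda>xs. \<Sum>i<b xs. g i xs)"
proof -
  assume g: "primrec_fn (\<lambda>ys. g (proj 0 ys) (tl ys))" and b: "primrec_fn b"
  have h: "primrec_fn (\<lambda>ys. g (proj (Suc 0) ys) (tl (tl ys)))" by (rule pr_substL[OF g, where L=tl]) auto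
  show ?thesis
    by (rule pr_recI[where b="\<lambda>xs. 0" and n=b and s="\<lambda>r m xs. r + g m xs"]) (simp_all add: rec_sum b h prI)
qed



declare listfn_tl[prI] pr_projL[prI]

lemma fst_sum: "fst (prod_decode n) =
  (\<Sum>x<Suc n. \<Sum>y<Suc n. if (pair x y - n) + (n - pair x y) = 0 then x else 0)"
proof -
  obtain a b where ab: "prod_decode n = (a, b)" by (cases "prod_decode n")
  have n: "n = prod_encode (a, b)" using ab by (metis prod_decode_inverse)
  have a: "a < Suc n" and b: "b < Suc n" using le_prod_encode_1 le_prod_encode_2 n by (auto simp: less_Suc_eq_le)
  have eq: "\<And>x y. ((pair x y - n) + (n - pair x y) = 0) = (x = a \<and> y = b)"
    using n by (auto simp: pair_def)
  have "(\<Sum>x<Suc n. \<Sum>y<Suc n. if x = a \<and> y = b then x else 0) = (\<Sum>x<Suc n. if x = a then x else 0)"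
    by (rule sum.cong) (use b in \<open>auto simp: sum.delta\<close>)
  also have "\<dots> = a" using a by (simp add: sum.delta')
  finally show ?thesis using ab eq by simp
qed

lemma snd_sum: "snd (prod_decode n) =
  (\<Sum>x<Suc n. \<Sum>y<Suc n. if (pair x y - n) + (n - pair x y) = 0 then y else 0)"
proof -
  obtain a b where ab: "prod_decode n = (a, b)" by (cases "prod_decode n")
  have n: "n = prod_encode (a, b)" using ab by (metis prod_decode_inverse)
  have a: "a < Suc n" and b: "b < Suc n" using le_prod_encode_1 le_prod_encode_2 n by (auto simp: less_Suc_eq_le)
  have eq: "\<And>x y. ((pair x y - n) + (n - pair x y) = 0) = (x = a \<and> y = b)"
    using n by (auto simp: pair_def)
  have "(\<Sum>x<Suc n. \<Sum>y<Suc n. if x = a \<and> y = b then y else 0) = (\<Sum>x<Suc n. if x = a then b else 0)"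
    by (rule sum.cong) (use b in \<open>auto simp: sum.delta\<close>)
  also have "\<dots> = b" using a by (simp add: sum.delta')
  finally show ?thesis using ab eq by simp
qed

lemma pr_if0'[prI]: "primrec_fn q \<Longrightarrow> primrec_fn a \<Longrightarrow> primrec_fn b \<Longrightarrow>
  primrec_fn (\<lambda>xs. if q xs = 0 then a xs else b xs)"
  by (rule pr_if0)

lemma pr_fst0: "primrec_fn (\<lambda>xs. fst (prod_decode (proj 0 xs)))"
  unfolding fst_sum by (intro prI)

lemma pr_snd0: "primrec_fn (\<lambda>xs. snd (prod_decode (proj 0 xs)))"
  unfolding snd_sum by (intro prI)

lemma pr_fst[prI]: "primrec_fn a \<Longrightarrow> primrec_fn (\<lambda>xs. fst (prod_decode (a xs)))"
  by (rule pr_substL[OF pr_fst0, where L="\<lambda>xs. [a xs]"]) (simp_all add: prI)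

lemma pr_snd[prI]: "primrec_fn a \<Longrightarrow> primrec_fn (\<lambda>xs. snd (prod_decode (a xs)))"
  by (rule pr_substL[OF pr_snd0, where L="\<lambda>xs. [a xs]"]) (simp_all add: prI)

definition seq :: "nat \<Rightarrow> nat \<Rightarrow> nat" where
  "seq s k = fst (prod_decode (((\<lambda>x. snd (prod_decode x)) ^^ k) s))"

lemma funpow_rec: "(f ^^ k) s = rec_nat s (\<lambda>m r. f r) k" by (induction k) auto

lemma pr_seq[prI]: "primrec_fn a \<Longrightarrow> primrec_fn b \<Longrightarrow> primrec_fn (\<lambda>xs. seq (a xs) (b xs))"
proof -
  assume a: "primrec_fn a" and b: "primrec_fn b"
  have "primrec_fn (\<lambda>xs. ((\<lambda>x. snd (prod_decode x)) ^^ b xs) (a xs))"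
    unfolding funpow_rec
    by (rule pr_recI[where b=a and n=b and s="\<lambda>r m xs. snd (prod_decode r)"]) (simp_all add: a b prI)
  then show ?thesis unfolding seq_def by (simp add: prI)
qed

lemma seq_0[simp]: "seq (pair a s) 0 = a" by (simp add: seq_def pair_def)
lemma seq_Suc[simp]: "seq (pair a s) (Suc k) = seq s k"
  by (simp add: seq_def pair_def funpow_Suc_right del: funpow.simps)

lemma seq_exists: "\<exists>s. \<forall>i<n. seq s i = g i"
proof (induction n arbitrary: g)
  case 0 then show ?case by simp
next
  case (Suc n)
  obtain s where "\<forall>i<n. seq s i = g (Suc i)" using Suc[of "\<lambda>i. g (Suc i)"] by blast
  then show ?case by (intro exI[of _ "pair (g 0) s"]) (auto simp: less_Suc_eq_0_disj)
qed

section \<open>primitive recursive predicates\<close>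

definition prp :: "(nat list \<Rightarrow> bool) \<Rightarrow> bool" where
  "prp P \<longleftrightarrow> (\<exists>q. primrec_fn q \<and> (\<forall>xs. P xs \<longleftrightarrow> q xs = 0))"

named_theorems prpI

lemma prp_eq[prpI]: "primrec_fn a \<Longrightarrow> primrec_fn b \<Longrightarrow> prp (\<lambda>xs. a xs = b xs)"
  unfolding prp_def by (intro exI[of _ "\<lambda>xs. (a xs - b xs) + (b xs - a xs)"]) (auto simp: prI)

lemma prp_le[prpI]: "primrec_fn a \<Longrightarrow> primrec_fn b \<Longrightarrow> prp (\<lambda>xs. a xs \<le> b xs)"
  unfolding prp_def by (intro exI[of _ "\<lambda>xs. a xs - b xs"]) (auto simp: prI)

lemma prp_less[prpI]: "primrec_fn a \<Longrightarrow> primrec_fn b \<Longrightarrow> prp (\<lambda>xs. a xs < b xs)"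
  unfolding prp_def by (intro exI[of _ "\<lambda>xs. Suc (a xs) - b xs"]) (auto simp: prI)

lemma prp_not[prpI]: "prp P \<Longrightarrow> prp (\<lambda>xs. \<not> P xs)"
  unfolding prp_def by (elim exE, rule_tac x="\<lambda>xs. 1 - q xs" in exI) (auto simp: prI)

lemma prp_conj[prpI]: "prp P \<Longrightarrow> prp Q \<Longrightarrow> prp (\<lambda>xs. P xs \<and> Q xs)"
  unfolding prp_def by (elim exE, rule_tac x="\<lambda>xs. q xs + qa xs" in exI) (auto simp: prI)

lemma prp_disj[prpI]: "prp P \<Longrightarrow> prp Q \<Longrightarrow> prp (\<lambda>xs. P xs \<or> Q xs)"
  unfolding prp_def by (elim exE, rule_tac x="\<lambda>xs. q xs * qa xs" in exI) (auto simp: prI)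

lemma prp_imp[prpI]: "prp P \<Longrightarrow> prp Q \<Longrightarrow> prp (\<lambda>xs. P xs \<longrightarrow> Q xs)"
proof -
  assume "prp P" "prp Q"
  then have "prp (\<lambda>xs. \<not> P xs \<or> Q xs)" by (intro prpI)
  then show ?thesis by simp
qed

lemma prp_True[prpI]: "prp (\<lambda>xs. True)"
  unfolding prp_def by (intro exI[of _ "\<lambda>xs. 0"]) (auto simp: prI)

lemma prp_ball[prpI]: "prp (\<lambda>ys. P (proj 0 ys) (tl ys)) \<Longrightarrow> primrec_fn b \<Longrightarrow>
  prp (\<lambda>xs. \<forall>i<b xs. P i xs)"
proof -
  assume "prp (\<lambda>ys. P (proj 0 ys) (tl ys))" and b: "primrec_fn b"
  then obtain q where q: "primrec_fn q" and qP: "\<And>ys. P (proj 0 ys) (tl ys) \<longleftrightarrow> q ys = 0"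
    unfolding prp_def by blast
  have "primrec_fn (\<lambda>ys. q (proj 0 ys # tl ys))"
    by (rule pr_substL[OF q, where L="\<lambda>ys. proj 0 ys # tl ys"]) (simp_all add: prI)
  then have "primrec_fn (\<lambda>xs. \<Sum>i<b xs. q (i # xs))" using b by (simp add: prI)
  moreover have "\<And>xs. (\<forall>i<b xs. P i xs) \<longleftrightarrow> (\<Sum>i<b xs. q (i # xs)) = 0"
    using qP[of "_ # _"] by auto
  ultimately show ?thesis unfolding prp_def by blast
qed

lemma mem_D_less: "i \<in> D u \<Longrightarrow> i < u"
proof -
  assume "i \<in> D u"
  then have "odd (u div 2 ^ i)" by (simp add: set_decode_def)
  then have "u div 2 ^ i \<noteq> 0" by (rule contrapos_pn) simp
  then have "2 ^ i \<le> u" by (simp add: div_eq_0_iff)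
  moreover have "i < 2 ^ i" by (rule less_exp)
  ultimately show ?thesis by (meson order_less_le_trans)
qed

lemma prp_mem[prpI]: "primrec_fn a \<Longrightarrow> primrec_fn b \<Longrightarrow> prp (\<lambda>xs. a xs \<in> D (b xs))"
proof -
  assume a: "primrec_fn a" and b: "primrec_fn b"
  have "prp (\<lambda>xs. b xs div 2 ^ a xs mod 2 = 1)" using a b by (intro prpI) (simp_all add: prI)
  then show ?thesis by (simp add: set_decode_def odd_iff_mod_2_eq_one)
qed

lemma D_subset_iff: "D a \<subseteq> D b \<longleftrightarrow> (\<forall>i<a. i \<in> D a \<longrightarrow> i \<in> D b)"
  using mem_D_less by blast

lemma prp_subset[prpI]: "primrec_fn a \<Longrightarrow> primrec_fn b \<Longrightarrow> prp (\<lambda>xs. D (a xs) \<subseteq> D (b xs))"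
proof -
  assume a: "primrec_fn a" and b: "primrec_fn b"
  have "primrec_fn (\<lambda>ys. a (tl ys))" "primrec_fn (\<lambda>ys. b (tl ys))"
    by (rule pr_substL[OF a, where L=tl], simp_all add: prI) (rule pr_substL[OF b, where L=tl], simp_all add: prI)
  then have "prp (\<lambda>xs. \<forall>i<a xs. i \<in> D (a xs) \<longrightarrow> i \<in> D (b xs))" using a
    by (intro prpI) (simp_all add: prI)
  then show ?thesis by (simp add: D_subset_iff[symmetric])
qed

lemma pr_if[prI]: "prp P \<Longrightarrow> primrec_fn a \<Longrightarrow> primrec_fn b \<Longrightarrow>
  primrec_fn (\<lambda>xs. if P xs then a xs else b xs)"
proof -
  assume "prp P" "primrec_fn a" "primrec_fn b"
  then obtain q where "primrec_fn q" "\<And>xs. P xs \<longleftrightarrow> q xs = 0" unfolding prp_def by blast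
  then show ?thesis using pr_if0[of q a b] \<open>primrec_fn a\<close> \<open>primrec_fn b\<close> by simp
qed



definition ce_pred :: "(nat list \<Rightarrow> bool) \<Rightarrow> bool" where
  "ce_pred P \<longleftrightarrow> (\<exists>p. primrec_fn p \<and> (\<forall>xs. P xs \<longleftrightarrow> (\<exists>y. p (y # xs) = 0)))"

lemma listfn_comp: "listfn L \<Longrightarrow> listfn M \<Longrightarrow> listfn (\<lambda>xs. L (M xs))"
  unfolding listfn_def
proof
  fix i assume L: "\<forall>i. primrec_fn (\<lambda>xs. proj i (L xs))" and M: "\<forall>i. primrec_fn (\<lambda>xs. proj i (M xs))"
  show "primrec_fn (\<lambda>xs. proj i (L (M xs)))"
    using pr_subst[OF L[rule_format, of i], of M] M by (simp add: listfn_def)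
qed

lemma D_pow2[simp]: "D (2 ^ n) = {n}"
proof -
  have "set_encode {n} = 2 ^ n" by simp
  then show ?thesis by (metis finite.emptyI finite_insert set_encode_inverse)
qed

named_theorems ceI

lemma ce_prp: "prp P \<Longrightarrow> ce_pred P"
proof -
  assume "prp P"
  then obtain q where q: "primrec_fn q" "\<And>xs. P xs \<longleftrightarrow> q xs = 0" unfolding prp_def by blast
  have "primrec_fn (\<lambda>ys. q (tl ys))" by (rule pr_substL[OF q(1), where L=tl]) (simp_all add: prI)
  then show ?thesis unfolding ce_pred_def using q(2) by (intro exI[of _ "\<lambda>ys. q (tl ys)"]) auto
qed

lemma ce_subst: "ce_pred P \<Longrightarrow> listfn L \<Longrightarrow> ce_pred (\<lambda>xs. P (L xs))"
proof -
  assume "ce_pred P" and L: "listfn L"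
  then obtain p where p: "primrec_fn p" "\<And>xs. P xs \<longleftrightarrow> (\<exists>y. p (y # xs) = 0)" unfolding ce_pred_def by blast
  have L': "listfn (\<lambda>ys. L (tl ys))" using L by (rule listfn_comp) (rule listfn_tl1)
  have "primrec_fn (\<lambda>ys. p (proj 0 ys # L (tl ys)))"
    by (rule pr_substL[OF p(1), where L="\<lambda>ys. proj 0 ys # L (tl ys)"]) (simp_all add: prI L')
  then show ?thesis unfolding ce_pred_def using p(2) by (intro exI[of _ "\<lambda>ys. p (proj 0 ys # L (tl ys))"]) auto
qed


lemma ce_conj[ceI]: "ce_pred P \<Longrightarrow> ce_pred Q \<Longrightarrow> ce_pred (\<lambda>xs. P xs \<and> Q xs)"
proof -
  assume "ce_pred P" "ce_pred Q"
  then obtain p q where p: "primrec_fn p" "\<And>xs. P xs \<longleftrightarrow> (\<exists>y. p (y # xs) = 0)"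
    and q: "primrec_fn q" "\<And>xs. Q xs \<longleftrightarrow> (\<exists>y. q (y # xs) = 0)" unfolding ce_pred_def by metis
  let ?r = "\<lambda>ys. p (fst (prod_decode (proj 0 ys)) # tl ys) + q (snd (prod_decode (proj 0 ys)) # tl ys)"
  have "primrec_fn (\<lambda>ys. p (fst (prod_decode (proj 0 ys)) # tl ys))"
    by (rule pr_subst[OF p(1)]) (intro prI)
  moreover have "primrec_fn (\<lambda>ys. q (snd (prod_decode (proj 0 ys)) # tl ys))"
    by (rule pr_subst[OF q(1)]) (intro prI)
  ultimately have r: "primrec_fn ?r" by (rule pr_add)
  have "\<And>xs. P xs \<and> Q xs \<longleftrightarrow> (\<exists>y. ?r (y # xs) = 0)"
  proof
    fix xs assume "P xs \<and> Q xs"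
    then obtain y1 y2 where "p (y1 # xs) = 0" "q (y2 # xs) = 0" using p q by blast
    then show "\<exists>y. ?r (y # xs) = 0" by (intro exI[of _ "prod_encode (y1, y2)"]) simp
  next
    fix xs assume "\<exists>y. ?r (y # xs) = 0"
    then show "P xs \<and> Q xs" using p q by auto
  qed
  then show ?thesis unfolding ce_pred_def using r by blast
qed

lemma ce_disj[ceI]: "ce_pred P \<Longrightarrow> ce_pred Q \<Longrightarrow> ce_pred (\<lambda>xs. P xs \<or> Q xs)"
proof -
  assume "ce_pred P" "ce_pred Q"
  then obtain p q where p: "primrec_fn p" "\<And>xs. P xs \<longleftrightarrow> (\<exists>y. p (y # xs) = 0)"
    and q: "primrec_fn q" "\<And>xs. Q xs \<longleftrightarrow> (\<exists>y. q (y # xs) = 0)" unfolding ce_pred_def by metis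
  have r: "primrec_fn (\<lambda>ys. p ys * q ys)" using p q by (simp add: prI)
  have "\<And>xs. P xs \<or> Q xs \<longleftrightarrow> (\<exists>y. p (y # xs) * q (y # xs) = 0)"
    using p q by auto
  then show ?thesis unfolding ce_pred_def using r by blast
qed

lemma ce_ex[ceI]: "ce_pred (\<lambda>ys. P (proj 0 ys) (tl ys)) \<Longrightarrow> ce_pred (\<lambda>xs. \<exists>z. P z xs)"
proof -
  assume "ce_pred (\<lambda>ys. P (proj 0 ys) (tl ys))"
  then obtain p where p: "primrec_fn p" "\<And>ys. P (proj 0 ys) (tl ys) \<longleftrightarrow> (\<exists>y. p (y # ys) = 0)"
    unfolding ce_pred_def by blast
  let ?r = "\<lambda>ys. p (fst (prod_decode (proj 0 ys)) # snd (prod_decode (proj 0 ys)) # tl ys)"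
  have r: "primrec_fn ?r" by (rule pr_subst[OF p(1)]) (intro prI)
  have "\<And>xs. (\<exists>z. P z xs) \<longleftrightarrow> (\<exists>y. ?r (y # xs) = 0)"
  proof
    fix xs assume "\<exists>z. P z xs"
    then obtain z y where "p (y # z # xs) = 0" using p(2)[of "_ # xs"] by auto
    then show "\<exists>y. ?r (y # xs) = 0" by (intro exI[of _ "prod_encode (y, z)"]) simp
  next
    fix xs assume "\<exists>y. ?r (y # xs) = 0"
    then show "\<exists>z. P z xs" using p(2)[of "_ # xs"] by auto
  qed
  then show ?thesis unfolding ce_pred_def using r by blast
qed

lemma ce_ball[ceI]: "ce_pred (\<lambda>ys. P (proj 0 ys) (tl ys)) \<Longrightarrow> primrec_fn b \<Longrightarrow>
   ce_pred (\<lambda>xs. \<forall>i<b xs. P i xs)"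
proof -
  assume "ce_pred (\<lambda>ys. P (proj 0 ys) (tl ys))" and b: "primrec_fn b"
  then obtain p where p: "primrec_fn p" "\<And>ys. P (proj 0 ys) (tl ys) \<longleftrightarrow> (\<exists>y. p (y # ys) = 0)"
    unfolding ce_pred_def by blast
  let ?r = "\<lambda>ys. \<Sum>i<b (tl ys). p (seq (proj 0 ys) i # i # tl ys)"
  have b': "primrec_fn (\<lambda>ys. b (tl ys))" by (rule pr_substL[OF b, where L=tl]) (simp_all add: prI)
  have "primrec_fn (\<lambda>zs. p (seq (proj 0 (tl zs)) (proj 0 zs) # proj 0 zs # tl (tl zs)))"
    by (rule pr_subst[OF p(1)]) (intro prI)
  then have r: "primrec_fn ?r" using b' by (intro pr_sum) auto
  have "\<And>xs. (\<forall>i<b xs. P i xs) \<longleftrightarrow> (\<exists>y. ?r (y # xs) = 0)"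
  proof
    fix xs assume "\<forall>i<b xs. P i xs"
    then have "\<forall>i<b xs. \<exists>y. p (y # i # xs) = 0" using p(2)[of "_ # xs"] by auto
    then obtain g where g: "\<forall>i<b xs. p (g i # i # xs) = 0" by metis
    obtain s where "\<forall>i<b xs. seq s i = g i" using seq_exists by blast
    then show "\<exists>y. ?r (y # xs) = 0" using g by (intro exI[of _ s]) simp
  next
    fix xs assume "\<exists>y. ?r (y # xs) = 0"
    then show "\<forall>i<b xs. P i xs" using p(2)[of "_ # xs"] by auto
  qed
  then show ?thesis unfolding ce_pred_def using r by blast
qed

section \<open>Predicates enumeration reducible to Y\<close>

definition yce :: "nat set \<Rightarrow> (nat list \<Rightarrow> bool) \<Rightarrow> bool" where
  "yce Y P \<longleftrightarrow> (\<exists>Q. ce_pred Q \<and> (\<forall>xs. P xs \<longleftrightarrow> (\<exists>v. Q (v # xs) \<and> D v \<subseteq> Y)))"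

named_theorems yI

lemma yce_ce: "ce_pred P \<Longrightarrow> yce Y P"
proof -
  assume "ce_pred P"
  then have "ce_pred (\<lambda>ys. P (tl ys))" by (rule ce_subst) (simp add: prI)
  moreover have "\<forall>xs. P xs \<longleftrightarrow> (\<exists>v. P (tl (v # xs)) \<and> D v \<subseteq> Y)"
    by (metis list.sel(3) set_decode_zero empty_subsetI)
  ultimately show ?thesis unfolding yce_def by blast
qed

lemma yce_prp: "prp P \<Longrightarrow> yce Y P"
  by (intro yce_ce ce_prp)

lemma yce_subst: "yce Y P \<Longrightarrow> listfn L \<Longrightarrow> yce Y (\<lambda>xs. P (L xs))"
proof -
  assume "yce Y P" and L: "listfn L"
  then obtain Q where Q: "ce_pred Q" "\<And>xs. P xs \<longleftrightarrow> (\<exists>v. Q (v # xs) \<and> D v \<subseteq> Y)" unfolding yce_def by blast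
  have L': "listfn (\<lambda>ys. L (tl ys))" using L by (rule listfn_comp) (rule listfn_tl1)
  have "ce_pred (\<lambda>ys. Q (proj 0 ys # L (tl ys)))" by (rule ce_subst[OF Q(1)]) (simp add: prI L')
  then show ?thesis unfolding yce_def using Q(2) by (intro exI[of _ "\<lambda>ys. Q (proj 0 ys # L (tl ys))"]) auto
qed

lemma yce_Y[yI]: "primrec_fn a \<Longrightarrow> yce Y (\<lambda>xs. a xs \<in> Y)"
proof -
  assume a: "primrec_fn a"
  have a': "primrec_fn (\<lambda>ys. a (tl ys))" by (rule pr_substL[OF a, where L=tl]) (simp_all add: prI)
  have "ce_pred (\<lambda>ys. a (tl ys) \<in> D (proj 0 ys))" using a' by (intro ce_prp prp_mem) (simp_all add: prI)
  moreover have "\<And>xs. a xs \<in> Y \<longleftrightarrow> (\<exists>v. a xs \<in> D v \<and> D v \<subseteq> Y)"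
  proof
    fix xs assume "a xs \<in> Y"
    then show "\<exists>v. a xs \<in> D v \<and> D v \<subseteq> Y"
      by (intro exI[of _ "set_encode {a xs}"]) simp
  qed auto
  ultimately show ?thesis unfolding yce_def by (intro exI[of _ "\<lambda>ys. a (tl ys) \<in> D (proj 0 ys)"]) auto
qed

lemma yce_conj[yI]: "yce Y P1 \<Longrightarrow> yce Y P2 \<Longrightarrow> yce Y (\<lambda>xs. P1 xs \<and> P2 xs)"
proof -
  assume "yce Y P1" "yce Y P2"
  then obtain Q1 Q2 where Q1: "ce_pred Q1" "\<And>xs. P1 xs \<longleftrightarrow> (\<exists>v. Q1 (v # xs) \<and> D v \<subseteq> Y)"
    and Q2: "ce_pred Q2" "\<And>xs. P2 xs \<longleftrightarrow> (\<exists>v. Q2 (v # xs) \<and> D v \<subseteq> Y)" unfolding yce_def by metis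
  let ?Q = "\<lambda>ys. \<exists>v1. \<exists>v2. Q1 (v1 # tl ys) \<and> Q2 (v2 # tl ys) \<and> D v1 \<subseteq> D (proj 0 ys) \<and> D v2 \<subseteq> D (proj 0 ys)"
  have h1: "ce_pred (\<lambda>zs. Q1 (proj 0 (tl zs) # tl (tl (tl zs))))"
    by (rule ce_subst[OF Q1(1)]) (simp add: prI)
  have h2: "ce_pred (\<lambda>zs. Q2 (proj 0 zs # tl (tl (tl zs))))"
    by (rule ce_subst[OF Q2(1)]) (simp add: prI)
  have "ce_pred ?Q"
    apply (intro ceI)
    apply (rule h1)
    apply (rule h2)
    apply (rule ce_prp, intro prpI prI)+
    done
  moreover have "\<And>xs. P1 xs \<and> P2 xs \<longleftrightarrow> (\<exists>v. ?Q (v # xs) \<and> D v \<subseteq> Y)"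
  proof
    fix xs assume "P1 xs \<and> P2 xs"
    then obtain v1 v2 where v: "Q1 (v1 # xs)" "D v1 \<subseteq> Y" "Q2 (v2 # xs)" "D v2 \<subseteq> Y" using Q1 Q2 by blast
    then show "\<exists>v. ?Q (v # xs) \<and> D v \<subseteq> Y"
      by (intro exI[of _ "set_encode (D v1 \<union> D v2)"]) auto
  next
    fix xs assume "\<exists>v. ?Q (v # xs) \<and> D v \<subseteq> Y"
    then obtain v v1 v2 where "D v \<subseteq> Y" "Q1 (v1 # xs)" "Q2 (v2 # xs)" "D v1 \<subseteq> D v" "D v2 \<subseteq> D v"
      by auto
    then show "P1 xs \<and> P2 xs" unfolding Q1(2) Q2(2) by (meson order_trans)
  qed
  ultimately show ?thesis unfolding yce_def by blast
qed

lemma yce_disj[yI]: "yce Y P1 \<Longrightarrow> yce Y P2 \<Longrightarrow> yce Y (\<lambda>xs. P1 xs \<or> P2 xs)"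
proof -
  assume "yce Y P1" "yce Y P2"
  then obtain Q1 Q2 where Q1: "ce_pred Q1" "\<And>xs. P1 xs \<longleftrightarrow> (\<exists>v. Q1 (v # xs) \<and> D v \<subseteq> Y)"
    and Q2: "ce_pred Q2" "\<And>xs. P2 xs \<longleftrightarrow> (\<exists>v. Q2 (v # xs) \<and> D v \<subseteq> Y)" unfolding yce_def by metis
  have "ce_pred (\<lambda>ys. Q1 ys \<or> Q2 ys)" using Q1 Q2 by (intro ce_disj)
  moreover have "\<And>xs. P1 xs \<or> P2 xs \<longleftrightarrow> (\<exists>v. (Q1 (v # xs) \<or> Q2 (v # xs)) \<and> D v \<subseteq> Y)"
    using Q1 Q2 by blast
  ultimately show ?thesis unfolding yce_def by blast
qed

lemma yce_ex[yI]: "yce Y (\<lambda>ys. P (proj 0 ys) (tl ys)) \<Longrightarrow> yce Y (\<lambda>xs. \<exists>z. P z xs)"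
proof -
  assume "yce Y (\<lambda>ys. P (proj 0 ys) (tl ys))"
  then obtain Q where Q: "ce_pred Q" "\<And>ys. P (proj 0 ys) (tl ys) \<longleftrightarrow> (\<exists>v. Q (v # ys) \<and> D v \<subseteq> Y)"
    unfolding yce_def by blast
  have "ce_pred (\<lambda>zs. Q (proj 1 zs # proj 0 zs # tl (tl zs)))"
    by (rule ce_subst[OF Q(1)]) (simp add: prI)
  then have "ce_pred (\<lambda>ys. \<exists>z. Q (proj 0 ys # z # tl ys))"
    by (intro ceI) (simp add: numeral_eq_Suc)
  moreover have "\<And>xs. (\<exists>z. P z xs) \<longleftrightarrow> (\<exists>v. (\<exists>z. Q (v # z # xs)) \<and> D v \<subseteq> Y)"
    using Q(2)[of "_ # _"] by auto
  ultimately show ?thesis unfolding yce_def by (intro exI[of _ "\<lambda>ys. \<exists>z. Q (proj 0 ys # z # tl ys)"]) auto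
qed

lemma yce_ball[yI]: "yce Y (\<lambda>ys. P (proj 0 ys) (tl ys)) \<Longrightarrow> primrec_fn b \<Longrightarrow>
   yce Y (\<lambda>xs. \<forall>i<b xs. P i xs)"
proof -
  assume "yce Y (\<lambda>ys. P (proj 0 ys) (tl ys))" and b: "primrec_fn b"
  then obtain Q where Q: "ce_pred Q" "\<And>ys. P (proj 0 ys) (tl ys) \<longleftrightarrow> (\<exists>v. Q (v # ys) \<and> D v \<subseteq> Y)"
    unfolding yce_def by blast
  let ?Q = "\<lambda>ys. \<forall>i<b (tl ys). \<exists>w. Q (w # i # tl ys) \<and> D w \<subseteq> D (proj 0 ys)"
  have b': "primrec_fn (\<lambda>ys. b (tl ys))" by (rule pr_substL[OF b, where L=tl]) (simp_all add: prI)
  have h: "ce_pred (\<lambda>zs. Q (proj 0 zs # proj 0 (tl zs) # tl (tl (tl zs))))"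
    by (rule ce_subst[OF Q(1)]) (simp add: prI)
  have "ce_pred ?Q"
    apply (intro ceI)
    apply (rule h)
    apply (rule ce_prp, intro prpI prI)+
    apply (rule b')
    done
  moreover have "\<And>xs. (\<forall>i<b xs. P i xs) \<longleftrightarrow> (\<exists>v. ?Q (v # xs) \<and> D v \<subseteq> Y)"
  proof
    fix xs assume "\<forall>i<b xs. P i xs"
    then have "\<forall>i<b xs. \<exists>w. Q (w # i # xs) \<and> D w \<subseteq> Y" using Q(2)[of "_ # xs"] by auto
    then obtain g where g: "\<forall>i<b xs. Q (g i # i # xs) \<and> D (g i) \<subseteq> Y" by metis
    let ?v = "set_encode (\<Union>i<b xs. D (g i))"
    have Dv: "D ?v = (\<Union>i<b xs. D (g i))" by simp
    show "\<exists>v. ?Q (v # xs) \<and> D v \<subseteq> Y"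
      by (intro exI[of _ ?v]) (use g Dv in auto)
  next
    fix xs assume "\<exists>v. ?Q (v # xs) \<and> D v \<subseteq> Y"
    then show "\<forall>i<b xs. P i xs" using Q(2)[of "_ # xs"] by fastforce
  qed
  ultimately show ?thesis unfolding yce_def by blast
qed

definition yset :: "nat set \<Rightarrow> nat set \<Rightarrow> bool" where
  "yset Y A \<longleftrightarrow> yce Y (\<lambda>xs. proj 0 xs \<in> A)"

lemma yce_set[yI]: "yset Y A \<Longrightarrow> primrec_fn a \<Longrightarrow> yce Y (\<lambda>xs. a xs \<in> A)"
  unfolding yset_def by (drule yce_subst[where L="\<lambda>xs. [a xs]"]) (simp_all add: prI)



lemma yce_imp[yI]: "prp P \<Longrightarrow> yce Y Q \<Longrightarrow> yce Y (\<lambda>xs. P xs \<longrightarrow> Q xs)"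
proof -
  assume "prp P" "yce Y Q"
  then have "yce Y (\<lambda>xs. \<not> P xs \<or> Q xs)" by (intro yce_disj[OF yce_prp[OF prp_not]])
  then show ?thesis by simp
qed

lemma ce_cong: "ce_pred P \<Longrightarrow> (\<And>xs. Q xs \<longleftrightarrow> P xs) \<Longrightarrow> ce_pred Q"
proof -
  assume "ce_pred P" "\<And>xs. Q xs \<longleftrightarrow> P xs"
  moreover have "Q = P" using \<open>\<And>xs. Q xs \<longleftrightarrow> P xs\<close> by (rule ext)
  ultimately show ?thesis by simp
qed

lemma yce_cong: "yce Y P \<Longrightarrow> (\<And>xs. Q xs \<longleftrightarrow> P xs) \<Longrightarrow> yce Y Q"
proof -
  assume "yce Y P" "\<And>xs. Q xs \<longleftrightarrow> P xs"
  moreover have "Q = P" using \<open>\<And>xs. Q xs \<longleftrightarrow> P xs\<close> by (rule ext)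
  ultimately show ?thesis by simp
qed

lemma ce_set_pred: "ce_set S \<longleftrightarrow> ce_pred (\<lambda>xs. proj 0 xs \<in> S)"
proof
  assume "ce_set S"
  then obtain p where p: "primrec_fn p" "S = {x. \<exists>y. p [x, y] = 0}" unfolding ce_set_def by blast
  have "primrec_fn (\<lambda>l. p [proj 1 l, proj 0 l])" by (rule pr_subst[OF p(1)]) (intro prI)
  moreover have "\<forall>xs. proj 0 xs \<in> S \<longleftrightarrow> (\<exists>y. p [proj 1 (y # xs), proj 0 (y # xs)] = 0)" using p(2) by simp
  ultimately show "ce_pred (\<lambda>xs. proj 0 xs \<in> S)" unfolding ce_pred_def by blast
next
  assume "ce_pred (\<lambda>xs. proj 0 xs \<in> S)"
  then obtain p where p: "primrec_fn p" "\<And>xs. proj 0 xs \<in> S \<longleftrightarrow> (\<exists>y. p (y # xs) = 0)"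
    unfolding ce_pred_def by blast
  have "primrec_fn (\<lambda>l. p [proj 1 l, proj 0 l])" by (rule pr_subst[OF p(1)]) (intro prI)
  moreover have "S = {x. \<exists>y. p [proj 1 [x, y], proj 0 [x, y]] = 0}" using p(2)[of "[_]"] by auto
  ultimately show "ce_set S" unfolding ce_set_def by blast
qed

lemma ce_rel_pred: "ce_rel R \<Longrightarrow> ce_pred (\<lambda>xs. R (proj 0 xs) (proj 1 xs))"
proof -
  assume "ce_rel R"
  then obtain p where p: "primrec_fn p" "\<And>x u. R x u \<longleftrightarrow> (\<exists>y. p [x, u, y] = 0)" unfolding ce_rel_def by blast
  have "primrec_fn (\<lambda>l. p [proj 1 l, proj 2 l, proj 0 l])" by (rule pr_subst[OF p(1)]) (intro prI)
  moreover have "\<forall>xs. R (proj 0 xs) (proj 1 xs) \<longleftrightarrow> (\<exists>y. p [proj 1 (y # xs), proj 2 (y # xs), proj 0 (y # xs)] = 0)"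
    using p(2) by (simp add: numeral_eq_Suc)
  ultimately show ?thesis unfolding ce_pred_def by blast
qed

lemma ered_yset: "A \<le>\<^sub>e Y \<longleftrightarrow> yset Y A"
proof
  assume "A \<le>\<^sub>e Y"
  then obtain R where R: "ce_rel R" "\<And>x. x \<in> A \<longleftrightarrow> (\<exists>u. R x u \<and> D u \<subseteq> Y)"
    unfolding e_reducible_def by blast
  have "ce_pred (\<lambda>ys. R (proj 1 ys) (proj 0 ys))"
    using ce_subst[OF ce_rel_pred[OF R(1)], of "\<lambda>ys. [proj 1 ys, proj 0 ys]"] by (simp add: prI)
  then show "yset Y A" unfolding yset_def yce_def using R(2)
    by (intro exI[of _ "\<lambda>ys. R (proj 1 ys) (proj 0 ys)"]) auto
next
  assume "yset Y A"
  then obtain Q where Q: "ce_pred Q" "\<And>xs. proj 0 xs \<in> A \<longleftrightarrow> (\<exists>v. Q (v # xs) \<and> D v \<subseteq> Y)"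
    unfolding yset_def yce_def by blast
  then obtain p where p: "primrec_fn p" "\<And>ys. Q ys \<longleftrightarrow> (\<exists>y. p (y # ys) = 0)" unfolding ce_pred_def by blast
  have "primrec_fn (\<lambda>l. p [proj 2 l, proj 1 l, proj 0 l])" by (rule pr_subst[OF p(1)]) (intro prI)
  then have "ce_rel (\<lambda>x u. Q [u, x])" unfolding ce_rel_def using p(2)
    by (intro exI[of _ "\<lambda>l. p [proj 2 l, proj 1 l, proj 0 l]"]) (simp add: numeral_eq_Suc)
  moreover have "\<forall>x. x \<in> A \<longleftrightarrow> (\<exists>u. Q [u, x] \<and> D u \<subseteq> Y)" using Q(2)[of "[_]"] by simp
  ultimately show "A \<le>\<^sub>e Y" unfolding e_reducible_def by blast
qed

lemma D_subset_iff2: "D u \<subseteq> B \<longleftrightarrow> (\<forall>i<u. i \<in> D u \<longrightarrow> i \<in> B)"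
  using mem_D_less by blast

lemma yset_gapp: "yset Y A \<Longrightarrow> yset Y B \<Longrightarrow> yset Y (gapp A B)"
proof -
  assume hA: "yset Y A" and hB: "yset Y B"
  have "yce Y (\<lambda>xs. \<exists>u. pair (proj 0 xs) u \<in> A \<and> (\<forall>i<u. i \<in> D u \<longrightarrow> i \<in> B))"
    apply (intro yI)
    apply (rule hA)
    apply (intro prI)
    apply (intro prpI prI)
    apply (rule hB)
    apply (intro prI)+
    done
  then show ?thesis unfolding yset_def gapp_def
    by (rule yce_cong) (simp add: D_subset_iff2)
qed

lemma G_yset: "A \<in> G Y \<Longrightarrow> yset Y A"
proof (induction rule: G.induct)
  case G_base
  then show ?case unfolding yset_def by (intro yI prI)
next
  case (G_ce S)
  then show ?case unfolding yset_def by (intro yce_ce) (simp add: ce_set_pred)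
next
  case (G_app A B)
  then show ?case using yset_gapp by blast
qed



definition Gam :: "nat set \<Rightarrow> nat \<Rightarrow> nat \<Rightarrow> bool" where
  "Gam T a b \<longleftrightarrow> (\<forall>i<a. i \<in> D a \<longrightarrow> (\<exists>w. pair i w \<in> T \<and> D w \<subseteq> D b))"

lemma gapp_fin: "D a \<subseteq> gapp T Z \<longleftrightarrow> (\<exists>b. Gam T a b \<and> D b \<subseteq> Z)"
proof
  assume h: "D a \<subseteq> gapp T Z"
  then have "\<forall>i\<in>D a. \<exists>w. pair i w \<in> T \<and> D w \<subseteq> Z" unfolding gapp_def by blast
  then obtain g where g: "\<forall>i\<in>D a. pair i (g i) \<in> T \<and> D (g i) \<subseteq> Z" by metis
  let ?b = "set_encode (\<Union>i\<in>D a. D (g i))"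
  have Db: "D ?b = (\<Union>i\<in>D a. D (g i))" by simp
  show "\<exists>b. Gam T a b \<and> D b \<subseteq> Z"
    by (intro exI[of _ ?b]) (use g Db in \<open>auto simp: Gam_def\<close>)
next
  assume "\<exists>b. Gam T a b \<and> D b \<subseteq> Z"
  then show "D a \<subseteq> gapp T Z" unfolding Gam_def gapp_def using mem_D_less by blast
qed

lemma seq_Suc': "seq s (Suc k) = seq (snd (prod_decode s)) k"
  by (simp add: seq_def funpow_Suc_right del: funpow.simps)

lemma chain: "D u \<subseteq> (gapp T ^^ n) C \<longleftrightarrow>
  (\<exists>s. seq s 0 = u \<and> (\<forall>k<n. Gam T (seq s k) (seq s (Suc k))) \<and> D (seq s n) \<subseteq> C)"
proof (induction n arbitrary: u)
  case 0
  show ?case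
  proof
    assume "D u \<subseteq> (gapp T ^^ 0) C"
    then show "\<exists>s. seq s 0 = u \<and> (\<forall>k<0. Gam T (seq s k) (seq s (Suc k))) \<and> D (seq s 0) \<subseteq> C"
      by (intro exI[of _ "pair u 0"]) simp
  qed auto
next
  case (Suc n)
  show ?case
  proof
    assume "D u \<subseteq> (gapp T ^^ Suc n) C"
    then obtain b where b: "Gam T u b" "D b \<subseteq> (gapp T ^^ n) C" by (auto simp: gapp_fin)
    then obtain s where s: "seq s 0 = b" "\<forall>k<n. Gam T (seq s k) (seq s (Suc k))" "D (seq s n) \<subseteq> C"
      using Suc.IH by blast
    show "\<exists>s. seq s 0 = u \<and> (\<forall>k<Suc n. Gam T (seq s k) (seq s (Suc k))) \<and> D (seq s (Suc n)) \<subseteq> C"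
      by (intro exI[of _ "pair u s"]) (use s b in \<open>auto simp: less_Suc_eq_0_disj\<close>)
  next
    assume "\<exists>s. seq s 0 = u \<and> (\<forall>k<Suc n. Gam T (seq s k) (seq s (Suc k))) \<and> D (seq s (Suc n)) \<subseteq> C"
    then obtain s where s: "seq s 0 = u" "\<forall>k<Suc n. Gam T (seq s k) (seq s (Suc k))" "D (seq s (Suc n)) \<subseteq> C"
      by blast
    let ?s = "snd (prod_decode s)"
    have "seq ?s 0 = seq s 1" "\<forall>k<n. Gam T (seq ?s k) (seq ?s (Suc k))" "D (seq ?s n) \<subseteq> C"
      using s by (auto simp: seq_Suc'[symmetric])
    then have "D (seq s 1) \<subseteq> (gapp T ^^ n) C" using Suc.IH by blast
    moreover have "Gam T u (seq s 1)" using s by auto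
    ultimately show "D u \<subseteq> (gapp T ^^ Suc n) C" by (auto simp: gapp_fin)
  qed
qed

lemma mem_gapp2: "m \<in> gapp (gapp W F) Q \<longleftrightarrow> (\<exists>u1 u2. pair (pair m u1) u2 \<in> W \<and> D u2 \<subseteq> F \<and> D u1 \<subseteq> Q)"
  by (auto simp: gapp_def)

lemma iter_yset:
  assumes hW: "yset Y W" and hT: "yset Y T" and hC: "yset Y C" and hQ: "yset Y Q"
  shows "yset Y {n. m \<in> gapp (gapp W ((gapp T ^^ n) C)) Q}"
proof -
  have "yce Y (\<lambda>xs. \<exists>u1 u2. pair (pair m u1) u2 \<in> W \<and>
      (\<exists>s. seq s 0 = u2 \<and>
        (\<forall>k<proj 0 xs. \<forall>i<seq s k. i \<in> D (seq s k) \<longrightarrow> (\<exists>w. pair i w \<in> T \<and> D w \<subseteq> D (seq s (Suc k)))) \<and>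
        (\<forall>i<seq s (proj 0 xs). i \<in> D (seq s (proj 0 xs)) \<longrightarrow> i \<in> C)) \<and>
      (\<forall>i<u1. i \<in> D u1 \<longrightarrow> i \<in> Q))"
    apply (intro yI)
    apply (rule hW hT hC hQ yce_prp | intro prpI prI)+
    done
  then show ?thesis unfolding yset_def
  proof (rule yce_cong)
    fix xs
    have "proj 0 xs \<in> {n. m \<in> gapp (gapp W ((gapp T ^^ n) C)) Q} \<longleftrightarrow>
       (\<exists>u1 u2. pair (pair m u1) u2 \<in> W \<and> D u2 \<subseteq> (gapp T ^^ proj 0 xs) C \<and> D u1 \<subseteq> Q)"
      by (simp add: mem_gapp2)
    also have "\<dots> \<longleftrightarrow> (\<exists>u1 u2. pair (pair m u1) u2 \<in> W \<and>
      (\<exists>s. seq s 0 = u2 \<and>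
        (\<forall>k<proj 0 xs. \<forall>i<seq s k. i \<in> D (seq s k) \<longrightarrow> (\<exists>w. pair i w \<in> T \<and> D w \<subseteq> D (seq s (Suc k)))) \<and>
        (\<forall>i<seq s (proj 0 xs). i \<in> D (seq s (proj 0 xs)) \<longrightarrow> i \<in> C)) \<and>
      (\<forall>i<u1. i \<in> D u1 \<longrightarrow> i \<in> Q))"
      unfolding chain Gam_def D_subset_iff2[of _ Q] D_subset_iff2[of _ C] by blast
    finally show "proj 0 xs \<in> {n. m \<in> gapp (gapp W ((gapp T ^^ n) C)) Q} \<longleftrightarrow> (\<exists>u1 u2. pair (pair m u1) u2 \<in> W \<and>
      (\<exists>s. seq s 0 = u2 \<and>
        (\<forall>k<proj 0 xs. \<forall>i<seq s k. i \<in> D (seq s k) \<longrightarrow> (\<exists>w. pair i w \<in> T \<and> D w \<subseteq> D (seq s (Suc k)))) \<and>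
        (\<forall>i<seq s (proj 0 xs). i \<in> D (seq s (proj 0 xs)) \<longrightarrow> i \<in> C)) \<and>
      (\<forall>i<u1. i \<in> D u1 \<longrightarrow> i \<in> Q))" .
  qed
qed



lemma gapp_img: "gapp ((\<lambda>x. pair (g x) (h x)) ` S) W = g ` {x \<in> S. D (h x) \<subseteq> W}"
  unfolding gapp_def pair_def by auto

lemma gapp_Un: "gapp (U \<union> V) W = gapp U W \<union> gapp V W"
  unfolding gapp_def by auto

lemma ce_empty: "ce_set {}"
  unfolding ce_set_def by (intro exI[of _ "\<lambda>xs. Suc (proj 0 xs)"]) (auto intro: pr_succ)

lemma ce_UNIV: "ce_set UNIV"
  unfolding ce_set_def by (intro exI[of _ "\<lambda>xs. 0"]) (auto intro: pr_zero)

lemma G_mono: "X \<le>\<^sub>e Y \<Longrightarrow> A \<in> G X \<Longrightarrow> A \<in> G Y"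
proof -
  assume "X \<le>\<^sub>e Y" and A: "A \<in> G X"
  then obtain R where R: "ce_rel R" "\<And>x. x \<in> X \<longleftrightarrow> (\<exists>u. R x u \<and> D u \<subseteq> Y)"
    unfolding e_reducible_def by blast
  define AR where "AR = {z. \<exists>x u. z = pair x u \<and> R x u}"
  have "ce_pred (\<lambda>zs. R (proj 0 (tl zs)) (proj 0 zs))"
    using ce_subst[OF ce_rel_pred[OF R(1)], of "\<lambda>zs. [proj 0 (tl zs), proj 0 zs]"] by (simp add: prI)
  then have "ce_pred (\<lambda>xs. \<exists>x u. proj 0 xs = pair x u \<and> R x u)"
    apply (intro ceI)
    apply (rule ce_prp, intro prpI prI)
    apply assumption
    done
  then have "ce_set AR" unfolding ce_set_pred AR_def by (rule ce_cong) auto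
  moreover have "gapp AR Y = X"
  proof -
    have "pair n u \<in> AR \<longleftrightarrow> R n u" for n u unfolding AR_def pair_def by auto
    then show ?thesis unfolding gapp_def using R(2) by auto
  qed
  ultimately have XY: "X \<in> G Y" by (metis G.G_app G.G_base G.G_ce)
  show "A \<in> G Y" using A
    by (induction rule: G.induct) (auto intro: XY G.intros)
qed

definition Ec :: "nat set" where
  "Ec = {z. (\<exists>j. z = pair (pair (pair (pair j 0) 0) 0) (2 ^ j)) \<or>
     (\<exists>j n. z = pair (pair (pair (pair j (2 ^ n)) (2 ^ n)) (2 ^ j)) 0)}"

definition Sc :: "nat set" where
  "Sc = {z. \<exists>k. z = pair (Suc k) (2 ^ k)}"

lemma ce_Ec: "ce_set Ec"
proof -
  have "ce_pred (\<lambda>xs. (\<exists>j. proj 0 xs = pair (pair (pair (pair j 0) 0) 0) (2 ^ j)) \<or>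
     (\<exists>j n. proj 0 xs = pair (pair (pair (pair j (2 ^ n)) (2 ^ n)) (2 ^ j)) 0))"
    by (intro ceI; (rule ce_prp, intro prpI prI))
  then show ?thesis unfolding ce_set_pred Ec_def by (rule ce_cong) simp
qed

lemma ce_Sc: "ce_set Sc"
proof -
  have "ce_pred (\<lambda>xs. \<exists>k. proj 0 xs = pair (Suc k) (2 ^ k))"
    by (intro ceI; (rule ce_prp, intro prpI prI))
  then show ?thesis unfolding ce_set_pred Sc_def by (rule ce_cong) simp
qed

lemma ce_0: "ce_set {0}"
proof -
  have "ce_pred (\<lambda>xs. proj 0 xs = 0)" by (rule ce_prp, intro prpI prI)
  then show ?thesis unfolding ce_set_pred by (rule ce_cong) auto
qed

lemma Sc_step: "gapp Sc {n} = {Suc n}"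
  unfolding Sc_def gapp_def pair_def by auto

lemma Ec_app: "gapp (gapp (gapp (gapp Ec A) B) N) Z = A \<union> {j \<in> B. \<exists>n\<in>N. n \<in> Z}"
proof -
  have 1: "gapp Ec A = {z. (\<exists>j. z = pair (pair (pair j 0) 0) 0 \<and> j \<in> A) \<or>
        (\<exists>j n. z = pair (pair (pair j (2 ^ n)) (2 ^ n)) (2 ^ j))}"
    unfolding Ec_def gapp_def pair_def by auto
  have 2: "gapp (gapp Ec A) B = {z. (\<exists>j. z = pair (pair j 0) 0 \<and> j \<in> A) \<or>
        (\<exists>j n. z = pair (pair j (2 ^ n)) (2 ^ n) \<and> j \<in> B)}"
    unfolding 1 by (auto simp: gapp_def pair_def)
  have 3: "gapp (gapp (gapp Ec A) B) N = {z. (\<exists>j. z = pair j 0 \<and> j \<in> A) \<or>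
        (\<exists>j n. z = pair j (2 ^ n) \<and> j \<in> B \<and> n \<in> N)}"
    unfolding 2 by (auto simp: gapp_def pair_def)
  show ?thesis
    unfolding 3 by (auto simp: gapp_def pair_def)
qed

theorem theorem7p10:
  fixes X Y :: "nat set"
  shows "(\<exists>f. pca_embedding X Y f \<and> \<not> order_reversing X f) \<longleftrightarrow> X \<le>\<^sub>e Y"
proof
  assume "\<exists>f. pca_embedding X Y f \<and> \<not> order_reversing X f"
  then obtain f where emb: "pca_embedding X Y f" and nor: "\<not> order_reversing X f" by blast
  have fG: "\<And>A. A \<in> G X \<Longrightarrow> f A \<in> G Y" and
    fapp: "\<And>A B. A \<in> G X \<Longrightarrow> B \<in> G X \<Longrightarrow> f (gapp A B) = gapp (f A) (f B)"
    using emb unfolding pca_embedding_def by auto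
  obtain A B where AB: "A \<in> G X" "B \<in> G X" "A \<subseteq> B" "\<not> f B \<subseteq> f A"
    using nor unfolding order_reversing_def by blast
  then obtain m where m: "m \<in> f B" "m \<notin> f A" by blast
  have EcG: "Ec \<in> G X" and ScG: "Sc \<in> G X" and N0G: "{0} \<in> G X"
    using ce_Ec ce_Sc ce_0 by (auto intro: G.G_ce)
  define N where "N n = (gapp Sc ^^ n) {0}" for n
  have NG: "N n \<in> G X" for n
    by (induction n) (auto simp: N_def intro: N0G G.G_app ScG)
  have Neq: "N n = {n}" for n
    by (induction n) (auto simp: N_def Sc_step)
  define W where "W = gapp (gapp Ec A) B"
  have WG: "W \<in> G X" unfolding W_def using EcG AB by (auto intro: G.G_app)
  have Z: "gapp (gapp W (N n)) X = (if n \<in> X then B else A)" for n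
  proof (cases "n \<in> X")
    case True
    then show ?thesis unfolding W_def Ec_app Neq using AB(3) by auto
  next
    case False
    then show ?thesis unfolding W_def Ec_app Neq by auto
  qed
  have fN: "f (N n) = (gapp (f Sc) ^^ n) (f {0})" for n
  proof (induction n)
    case 0 then show ?case by (simp add: N_def)
  next
    case (Suc n)
    have "f (N (Suc n)) = f (gapp Sc (N n))" by (simp add: N_def)
    also have "\<dots> = gapp (f Sc) (f (N n))" using fapp ScG NG by blast
    finally show ?case using Suc by simp
  qed
  have XG: "X \<in> G X" by (rule G.G_base)
  have key: "n \<in> X \<longleftrightarrow> m \<in> gapp (gapp (f W) ((gapp (f Sc) ^^ n) (f {0}))) (f X)" for n
  proof -
    have "f (gapp (gapp W (N n)) X) = gapp (gapp (f W) (f (N n))) (f X)"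
    proof -
      have WN: "gapp W (N n) \<in> G X" using WG NG by (rule G.G_app)
      have "f (gapp (gapp W (N n)) X) = gapp (f (gapp W (N n))) (f X)" using fapp[OF WN XG] .
      also have "f (gapp W (N n)) = gapp (f W) (f (N n))" using fapp[OF WG NG] .
      finally show ?thesis .
    qed
    then have "m \<in> gapp (gapp (f W) ((gapp (f Sc) ^^ n) (f {0}))) (f X) \<longleftrightarrow> m \<in> f (if n \<in> X then B else A)"
      using Z fN by simp
    then show ?thesis using m by auto
  qed
  have "X = {n. m \<in> gapp (gapp (f W) ((gapp (f Sc) ^^ n) (f {0}))) (f X)}"
    using key by blast
  moreover have "yset Y {n. m \<in> gapp (gapp (f W) ((gapp (f Sc) ^^ n) (f {0}))) (f X)}"
    by (intro iter_yset G_yset fG WG ScG N0G XG)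
  ultimately show "X \<le>\<^sub>e Y" by (simp add: ered_yset)
next
  assume XY: "X \<le>\<^sub>e Y"
  have "pca_embedding X Y id" unfolding pca_embedding_def using G_mono[OF XY] by auto
  moreover have "\<not> order_reversing X id"
  proof
    have e: "{} \<in> G X" and u: "UNIV \<in> G X" using ce_empty ce_UNIV G.G_ce by auto
    assume h: "order_reversing X id"
    have "({}::nat set) \<subseteq> UNIV \<longrightarrow> id (UNIV::nat set) \<subseteq> id {}"
      using bspec[OF bspec[OF h[unfolded order_reversing_def] e] u] .
    then have "id (UNIV::nat set) \<subseteq> id {}" by simp
    then show False by simp
  qed
  ultimately show "\<exists>f. pca_embedding X Y f \<and> \<not> order_reversing X f" by blast
qed

end
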